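(* If $R$ is a weak symmetric ring, then $R$ is NJ-symmetric.
   Context: Rings are associative with identity. $N(R)$ is the set of nilpotent elements, $J(R)$ the Jacobson radical. $R$ is weak symmetric if for all $a,b,c\in R$, $abc\in N(R)$ implies $acb\in N(R)$. $R$ is NJ-symmetric if for all $a,b,c\in R$, $abc\in N(R)$ implies $bac\in J(R)$. *)

theory Defs
  imports Main
begin

definition nilpotents :: "'a::ring_1 set" where
  "nilpotents = {a. \<exists>n::nat. a ^ n = 0}"

definition left_ideal :: "'a::ring_1 set \<Rightarrow> bool" where
  "left_ideal I \<longleftrightarrow> 0 \<in> I \<and> (\<forall>x\<in>I. \<forall>y\<in>I. x + y \<in> I) \<and> (\<forall>x\<in>I. - x \<in> I)
     \<and> (\<forall>r x. x \<in> I \<longrightarrow> r * x \<in> I)"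

definition maximal_left_ideal :: "'a::ring_1 set \<Rightarrow> bool" where
  "maximal_left_ideal M \<longleftrightarrow> left_ideal M \<and> M \<noteq> UNIV \<and>
     (\<forall>I. left_ideal I \<and> M \<subseteq> I \<longrightarrow> I = M \<or> I = UNIV)"

definition jacobson :: "'a::ring_1 set" where
  "jacobson = \<Inter>{M. maximal_left_ideal M}"

definition weak_symmetric :: "'a::ring_1 itself \<Rightarrow> bool" where
  "weak_symmetric _ \<longleftrightarrow> (\<forall>a b c::'a. a * b * c \<in> nilpotents \<longrightarrow> a * c * b \<in> nilpotents)"

definition NJ_symmetric :: "'a::ring_1 itself \<Rightarrow> bool" where
  "NJ_symmetric _ \<longleftrightarrow> (\<forall>a b c::'a. a * b * c \<in> nilpotents \<longrightarrow> b * a * c \<in> jacobson)"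

end

theory Submission
  imports Defs
begin

lemma geo_ring1: "(\<Sum>i<n. (y::'a::ring_1)^i) * (1 - y) = 1 - y^n"
proof (induction n)
  case 0 then show ?case by simp
next
  case (Suc n)
  have "(\<Sum>i<Suc n. y^i) * (1 - y) = (\<Sum>i<n. y^i) * (1 - y) + y^n * (1 - y)"
    by (simp add: distrib_right)
  also have "\<dots> = 1 - y^Suc n" using Suc by (simp add: algebra_simps power_Suc2 power_commutes)
  finally show ?case .
qed

lemma pow_shift: "b * (a * b)^n = (b * a)^n * (b::'a::ring_1)"
proof (induction n)
  case 0 then show ?case by simp
next
  case (Suc n)
  have "b * (a * b)^Suc n = (b * (a * b)^n) * (a * b)" by (simp only: power_Suc2 mult.assoc)
  also have "\<dots> = ((b * a)^n * (b * a)) * b" using Suc by (simp add: mult.assoc)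
  finally show ?case by (simp only: power_Suc2)
qed

lemma nil_swap:
  assumes "(a::'a::ring_1) * b \<in> nilpotents" shows "b * a \<in> nilpotents"
proof -
  from assms obtain n where n: "(a*b)^n = 0" by (auto simp: nilpotents_def)
  have "(b*a)^Suc n = b * (a*b)^n * a"
  proof -
    have "b * (a*b)^n * a = (b*a)^n * b * a" by (simp only: pow_shift)
    also have "\<dots> = (b*a)^Suc n" by (simp only: power_Suc2 mult.assoc)
    finally show ?thesis by simp
  qed
  also have "\<dots> = 0" using n by simp
  finally show ?thesis unfolding nilpotents_def by blast
qed

lemma nil_sq:
  assumes "(y::'a::ring_1) * y \<in> nilpotents" shows "y \<in> nilpotents"
proof -
  from assms obtain n where n: "(y*y)^n = 0" by (auto simp: nilpotents_def)
  have "y^(2*n) = (y*y)^n" by (simp add: power_mult power2_eq_square)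
  with n have "y^(2*n) = 0" by simp
  then show ?thesis unfolding nilpotents_def by blast
qed

lemma ws_left:
  assumes ws: "weak_symmetric TYPE('a::ring_1)"
    and x: "(x::'a)^n = 0" and k: "k \<ge> 1"
  shows "r * x^k \<in> nilpotents"
  using k
proof (induction "n - k" arbitrary: k r rule: less_induct)
  case less
  show ?case
  proof (cases "k \<ge> n")
    case True
    then have "x^k = 0" using x by (metis le_add_diff_inverse power_add mult_zero_left)
    then show ?thesis unfolding nilpotents_def by (auto intro: exI[of _ 1])
  next
    case False
    have IH: "\<And>s. s * x^(Suc k) \<in> nilpotents"
      using less.hyps[of "Suc k"] False by simp
    have A: "s * x^k * t * x \<in> nilpotents" for s t
    proof -
      have "(t * s) * x^Suc k \<in> nilpotents" by (rule IH)
      then have "s * x^Suc k * t \<in> nilpotents"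
        using nil_swap[of t "s * x^Suc k"] by (simp add: mult.assoc)
      then have "(s * x^k) * x * t \<in> nilpotents"
        by (simp only: mult.assoc power_Suc2)
      then show ?thesis using ws unfolding weak_symmetric_def by blast
    qed
    obtain j where j: "k = Suc j" using less.prems by (cases k) auto
    have "r * x^k * (r * x^j) * x \<in> nilpotents" by (rule A)
    then have "(r * x^k) * (r * x^k) \<in> nilpotents"
      by (simp only: j mult.assoc power_Suc2)
    then show ?thesis by (rule nil_sq)
  qed
qed

lemma nil_all_in_jacobson:
  assumes all: "\<And>r. r * (x::'a::ring_1) \<in> nilpotents"
  shows "x \<in> jacobson"
  unfolding jacobson_def
proof (rule InterI)
  fix M :: "'a set" assume "M \<in> {M. maximal_left_ideal M}"
  then have M: "left_ideal M" "M \<noteq> UNIV"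
    and max: "\<And>I. left_ideal I \<Longrightarrow> M \<subseteq> I \<Longrightarrow> I = M \<or> I = UNIV"
    by (auto simp: maximal_left_ideal_def)
  show "x \<in> M"
  proof (rule ccontr)
    assume nx: "x \<notin> M"
    define I where "I = {m + r * x | m r. m \<in> M}"
    have "left_ideal I"
      unfolding left_ideal_def
    proof (intro conjI ballI allI impI)
      show "0 \<in> I" unfolding I_def using M(1) by (auto simp: left_ideal_def intro!: exI[of _ 0])
    next
      fix a b assume "a \<in> I" "b \<in> I"
      then obtain m1 r1 m2 r2 where "a = m1 + r1 * x" "b = m2 + r2 * x" "m1 \<in> M" "m2 \<in> M"
        unfolding I_def by blast
      moreover have "m1 + m2 \<in> M" using M(1) \<open>m1 \<in> M\<close> \<open>m2 \<in> M\<close> by (simp add: left_ideal_def)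
      ultimately have "a + b = (m1 + m2) + (r1 + r2) * x \<and> m1 + m2 \<in> M" by (simp add: algebra_simps)
      then show "a + b \<in> I" unfolding I_def by blast
    next
      fix a assume "a \<in> I"
      then obtain m r where "a = m + r * x" "m \<in> M" unfolding I_def by blast
      moreover have "- m \<in> M" using M(1) \<open>m \<in> M\<close> by (simp add: left_ideal_def)
      ultimately have "- a = (- m) + (- r) * x \<and> - m \<in> M" by (simp add: algebra_simps)
      then show "- a \<in> I" unfolding I_def by blast
    next
      fix s a assume "a \<in> I"
      then obtain m r where "a = m + r * x" "m \<in> M" unfolding I_def by blast
      moreover have "s * m \<in> M" using M(1) \<open>m \<in> M\<close> by (simp add: left_ideal_def)
      ultimately have "s * a = (s * m) + (s * r) * x \<and> s * m \<in> M" by (simp add: distrib_left mult.assoc)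
      then show "s * a \<in> I" unfolding I_def by blast
    qed
    moreover have "M \<subseteq> I" unfolding I_def by (force intro: exI[of _ 0])
    moreover have "x \<in> I"
    proof -
      have "x = 0 + 1 * x \<and> (0::'a) \<in> M" using M(1) by (simp add: left_ideal_def)
      then show ?thesis unfolding I_def by blast
    qed
    ultimately have "I = UNIV" using max nx by blast
    then have "1 \<in> I" by simp
    then obtain m r where mr: "1 = m + r * x" "m \<in> M" unfolding I_def by blast
    obtain n where n: "(r * x)^n = 0" using all[of r] by (auto simp: nilpotents_def)
    have "m = 1 - r * x" using mr by (simp add: algebra_simps)
    then have "(\<Sum>i<n. (r*x)^i) * m = 1" using geo_ring1[where n=n and y="r*x"] n by simp
    moreover have "(\<Sum>i<n. (r*x)^i) * m \<in> M" using M(1) mr(2) by (simp add: left_ideal_def)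
    ultimately have "1 \<in> M" by simp
    then have "\<And>y. y * 1 \<in> M" using M(1) unfolding left_ideal_def by blast
    then have "M = UNIV" by auto
    with M(2) show False by simp
  qed
qed

theorem theorem2p11:
  assumes "weak_symmetric TYPE('a::ring_1)"
  shows "NJ_symmetric TYPE('a)"
  unfolding NJ_symmetric_def
proof (intro allI impI)
  fix a b c :: 'a
  assume "a * b * c \<in> nilpotents"
  then have "a * c * b \<in> nilpotents" using assms unfolding weak_symmetric_def by blast
  then have "b * (a * c) \<in> nilpotents" using nil_swap[of "a*c" b] by simp
  then have X: "b * a * c \<in> nilpotents" by (simp add: mult.assoc)
  then obtain n where n: "(b * a * c)^n = 0" by (auto simp: nilpotents_def)
  show "b * a * c \<in> jacobson"
    by (rule nil_all_in_jacobson) (use ws_left[OF assms n, of 1] in simp)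
qed

end
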